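(* Let $(V,m)$ be a discrete measure space and $(b,c)$ a graph over $(V,m)$. The following are equivalent: (i) $Q^{(N)}\neq Q^{(D)}$, i.e. $D(Q^{(N)})/D(Q^{(D)})\neq\{0\}$; (ii) there exists $u\in D(Q^{(N)})$, $u\not\equiv0$, with $(\widetilde L+1)u=0$; (iii) there exists $u\in D(Q^{(N)})\cap\ell^\infty(V)$, $u\not\equiv0$, with $(\widetilde L+1)u=0$.
   Context: $V$ is a finite or countably infinite set and $m:V\to(0,\infty)$; $(V,m)$ is a discrete measure space. $C(V)$ is the set of all functions $V\to\mathbb C$, $C_c(V)$ the finitely supported ones, and $\ell^2(V,m)$ carries $\langle u,v\rangle=\sum_x u(x)\overline{v(x)}m(x)$. A graph over $(V,m)$ is a pair $(b,c)$ with $c:V\to[0,\infty)$, $b:V\times V\to[0,\infty)$, $b(x,x)=0$, $b(x,y)=b(y,x)$, $\sum_y b(x,y)<\infty$. Let $\widetilde F=\{u\in C(V):\sum_y|b(x,y)u(y)|<\infty\ \forall x\}$ and $\widetilde L u(x)=\frac{1}{m(x)}\sum_y b(x,y)(u(x)-u(y))+\frac{c(x)}{m(x)}u(x)$ for $u\in\widetilde F$. $Q^{(N)}$ is the form on $\ell^2(V,m)$ with domain $D(Q^{(N)})=\{u\in\ell^2(V,m):\frac12\sum_{x,y}b(x,y)|u(x)-u(y)|^2+\sum_x c(x)|u(x)|^2<\infty\}$ and $Q^{(N)}(u,v)=\frac12\sum_{x,y}b(x,y)(u(x)-u(y))\overline{(v(x)-v(y))}+\sum_x c(x)u(x)\overline{v(x)}$;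 it is non-negative, symmetric and closed, and $D(Q^{(N)})\subseteq\widetilde F$. $Q^{(D)}$ is the closure of the restriction of $Q^{(N)}$ to $C_c(V)$. *)

theory Defs
  imports "HOL-Analysis.Analysis"
begin

text \<open>Vertex set V is modelled by a countable type 'v (finite or countably infinite).
  Functions V \<rightarrow> C are of type 'v \<Rightarrow> complex.\<close>

definition is_graph :: "('v \<Rightarrow> real) \<Rightarrow> ('v \<Rightarrow> 'v \<Rightarrow> real) \<Rightarrow> ('v \<Rightarrow> real) \<Rightarrow> bool" where
  "is_graph m b c \<longleftrightarrow>
     (\<forall>x. m x > 0) \<and> (\<forall>x. c x \<ge> 0) \<and> (\<forall>x y. b x y \<ge> 0) \<and> (\<forall>x. b x x = 0) \<and>
     (\<forall>x y. b x y = b y x) \<and> (\<forall>x. (\<lambda>y. b x y) summable_on UNIV)"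

definition l2 :: "('v \<Rightarrow> real) \<Rightarrow> ('v \<Rightarrow> complex) set" where
  "l2 m = {u. (\<lambda>x. (cmod (u x))\<^sup>2 * m x) summable_on UNIV}"

definition l2_norm_sq :: "('v \<Rightarrow> real) \<Rightarrow> ('v \<Rightarrow> complex) \<Rightarrow> real" where
  "l2_norm_sq m u = (\<Sum>\<^sub>\<infinity>x. (cmod (u x))\<^sup>2 * m x)"

definition linfty :: "('v \<Rightarrow> complex) set" where
  "linfty = {u. \<exists>C. \<forall>x. cmod (u x) \<le> C}"

definition finsupp :: "('v \<Rightarrow> complex) set" where
  "finsupp = {u. finite {x. u x \<noteq> 0}}"

definition QN_dom :: "('v \<Rightarrow> real) \<Rightarrow> ('v \<Rightarrow> 'v \<Rightarrow> real) \<Rightarrow> ('v \<Rightarrow> real) \<Rightarrow> ('v \<Rightarrow> complex) set" where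
  "QN_dom m b c = {u. u \<in> l2 m \<and>
      (\<lambda>(x,y). b x y * (cmod (u x - u y))\<^sup>2) summable_on UNIV \<and>
      (\<lambda>x. c x * (cmod (u x))\<^sup>2) summable_on UNIV}"

definition QN :: "('v \<Rightarrow> 'v \<Rightarrow> real) \<Rightarrow> ('v \<Rightarrow> real) \<Rightarrow> ('v \<Rightarrow> complex) \<Rightarrow> real" where
  "QN b c u = (1/2) * (\<Sum>\<^sub>\<infinity>(x,y). b x y * (cmod (u x - u y))\<^sup>2) + (\<Sum>\<^sub>\<infinity>x. c x * (cmod (u x))\<^sup>2)"

text \<open>Domain of Q^(D): closure of C_c(V) in D(Q^(N)) w.r.t. the form norm
  (Q^(N)(u,u) + \<parallel>u\<parallel>^2)^(1/2).\<close>
definition QD_dom :: "('v \<Rightarrow> real) \<Rightarrow> ('v \<Rightarrow> 'v \<Rightarrow> real) \<Rightarrow> ('v \<Rightarrow> real) \<Rightarrow> ('v \<Rightarrow> complex) set" where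
  "QD_dom m b c = {u. u \<in> QN_dom m b c \<and>
      (\<exists>\<phi> :: nat \<Rightarrow> 'v \<Rightarrow> complex. (\<forall>n. \<phi> n \<in> finsupp \<and> (\<lambda>x. u x - \<phi> n x) \<in> QN_dom m b c) \<and>
         (\<lambda>n. QN b c ((\<lambda>x. u x - \<phi> n x)) + l2_norm_sq m ((\<lambda>x. u x - \<phi> n x))) \<longlonglongrightarrow> 0)}"

definition Ftilde :: "('v \<Rightarrow> 'v \<Rightarrow> real) \<Rightarrow> ('v \<Rightarrow> complex) set" where
  "Ftilde b = {u. \<forall>x. (\<lambda>y. cmod (complex_of_real (b x y) * u y)) summable_on UNIV}"

definition Ltilde :: "('v \<Rightarrow> real) \<Rightarrow> ('v \<Rightarrow> 'v \<Rightarrow> real) \<Rightarrow> ('v \<Rightarrow> real) \<Rightarrow> ('v \<Rightarrow> complex) \<Rightarrow> 'v \<Rightarrow> complex" where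
  "Ltilde m b c u x = complex_of_real (1 / m x) * (\<Sum>\<^sub>\<infinity>y. complex_of_real (b x y) * (u x - u y))
                      + complex_of_real (c x / m x) * u x"

end

theory Submission
  imports Defs
begin



definition wfin :: "('i \<Rightarrow> real) \<Rightarrow> ('i \<Rightarrow> complex) \<Rightarrow> bool" where
  "wfin w g \<longleftrightarrow> (\<lambda>i. w i * (cmod (g i))\<^sup>2) summable_on UNIV"
definition wsq :: "('i \<Rightarrow> real) \<Rightarrow> ('i \<Rightarrow> complex) \<Rightarrow> real" where
  "wsq w g = (\<Sum>\<^sub>\<infinity>i. w i * (cmod (g i))\<^sup>2)"
definition wip :: "('i \<Rightarrow> real) \<Rightarrow> ('i \<Rightarrow> complex) \<Rightarrow> ('i \<Rightarrow> complex) \<Rightarrow> complex" where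
  "wip w g k = (\<Sum>\<^sub>\<infinity>i. complex_of_real (w i) * (g i * cnj (k i)))"

lemma real_cmp_summable:
  fixes f g :: "'i \<Rightarrow> real"
  assumes "g summable_on A" "\<And>x. x \<in> A \<Longrightarrow> 0 \<le> f x" "\<And>x. x \<in> A \<Longrightarrow> f x \<le> g x"
  shows "f summable_on A"
proof -
  have "(\<lambda>x. norm (g x)) summable_on A" using assms(1) summable_on_iff_abs_summable_on_real by blast
  then have "(\<lambda>x. norm (f x)) summable_on A"
    by (rule Infinite_Sum.abs_summable_on_comparison_test) (use assms in force)
  then show ?thesis using summable_on_iff_abs_summable_on_real by blast
qed

lemma cplx_cmp_summable:
  fixes f :: "'i \<Rightarrow> complex" and g :: "'i \<Rightarrow> real"
  assumes "g summable_on A" "\<And>x. x \<in> A \<Longrightarrow> cmod (f x) \<le> g x"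
  shows "f summable_on A"
proof -
  have "(\<lambda>x. norm (g x)) summable_on A" using assms(1) summable_on_iff_abs_summable_on_real by blast
  then have "(\<lambda>x. norm (f x)) summable_on A"
    by (rule Infinite_Sum.abs_summable_on_comparison_test) (use assms in force)
  then show ?thesis using summable_on_iff_abs_summable_on_complex by blast
qed

lemma wsq_nonneg: "(\<And>i. 0 \<le> w i) \<Longrightarrow> 0 \<le> wsq w g"
  unfolding wsq_def by (rule infsum_nonneg) simp

lemma wfin_mono:
  assumes nn: "\<And>i. 0 \<le> w i" and k: "wfin w k" and le: "\<And>i. cmod (g i) \<le> cmod (k i)"
  shows "wfin w g" "wsq w g \<le> wsq w k"
proof -
  have le2: "w i * (cmod (g i))\<^sup>2 \<le> w i * (cmod (k i))\<^sup>2" for i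
    using nn[of i] le[of i] by (simp add: mult_left_mono power_mono)
  show "wfin w g" using k unfolding wfin_def
    by (rule real_cmp_summable) (use nn le2 in auto)
  then show "wsq w g \<le> wsq w k" using k unfolding wfin_def wsq_def
    by (intro infsum_mono) (use le2 in auto)
qed

lemma sq_add_le:
  fixes a b :: complex and e :: real
  assumes "e > 0"
  shows "(cmod (a + b))\<^sup>2 \<le> (1 + e) * (cmod a)\<^sup>2 + (1 + 1/e) * (cmod b)\<^sup>2"
proof -
  have "(cmod (a + b))\<^sup>2 \<le> (cmod a + cmod b)\<^sup>2"
    by (simp add: norm_triangle_ineq power_mono)
  also have "\<dots> \<le> (1 + e) * (cmod a)\<^sup>2 + (1 + 1/e) * (cmod b)\<^sup>2"
  proof -
    have "0 \<le> (e * cmod a - cmod b)\<^sup>2 / e" using assms by simp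
    also have "(e * cmod a - cmod b)\<^sup>2 / e = e * (cmod a)\<^sup>2 + (cmod b)\<^sup>2 / e - 2 * cmod a * cmod b"
      using assms by (simp add: field_simps power2_eq_square)
    finally show ?thesis using assms by (simp add: field_simps power2_eq_square)
  qed
  finally show ?thesis .
qed

lemma wfin_lin:
  assumes nn: "\<And>i. 0 \<le> w i" and g: "wfin w g" and k: "wfin w k"
  shows "wfin w (\<lambda>i. a * g i + c * k i)"
proof -
  have pt: "w i * (cmod (a * g i + c * k i))\<^sup>2 \<le>
     2 * (cmod a)\<^sup>2 * (w i * (cmod (g i))\<^sup>2) + 2 * (cmod c)\<^sup>2 * (w i * (cmod (k i))\<^sup>2)" for i
  proof -
    have "(cmod (a * g i + c * k i))\<^sup>2 \<le> (1 + 1) * (cmod (a * g i))\<^sup>2 + (1 + 1/1) * (cmod (c * k i))\<^sup>2"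
      by (rule sq_add_le) simp
    then have "(cmod (a * g i + c * k i))\<^sup>2 \<le> 2 * (cmod a)\<^sup>2 * (cmod (g i))\<^sup>2 + 2 * (cmod c)\<^sup>2 * (cmod (k i))\<^sup>2"
      by (simp add: norm_mult power_mult_distrib)
    from mult_left_mono[OF this nn[of i]] show ?thesis by (simp add: algebra_simps)
  qed
  have "(\<lambda>i. 2 * (cmod a)\<^sup>2 * (w i * (cmod (g i))\<^sup>2) + 2 * (cmod c)\<^sup>2 * (w i * (cmod (k i))\<^sup>2)) summable_on UNIV"
    using g k unfolding wfin_def by (intro summable_on_add summable_on_cmult_right)
  then show ?thesis unfolding wfin_def
    by (rule real_cmp_summable) (use nn pt in auto)
qed

lemma wfin_add_le:
  assumes nn: "\<And>i. 0 \<le> w i" and g: "wfin w g" and k: "wfin w k" and e: "e > 0"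
  shows "wsq w (\<lambda>i. g i + k i) \<le> (1 + e) * wsq w g + (1 + 1/e) * wsq w k"
proof -
  have s: "wfin w (\<lambda>i. g i + k i)" using wfin_lin[OF nn g k, of 1 1] by simp
  have "wsq w (\<lambda>i. g i + k i) \<le> (\<Sum>\<^sub>\<infinity>i. (1 + e) * (w i * (cmod (g i))\<^sup>2) + (1 + 1/e) * (w i * (cmod (k i))\<^sup>2))"
    unfolding wsq_def
  proof (rule infsum_mono)
    show "(\<lambda>i. w i * (cmod (g i + k i))\<^sup>2) summable_on UNIV" using s unfolding wfin_def .
    show "(\<lambda>i. (1 + e) * (w i * (cmod (g i))\<^sup>2) + (1 + 1/e) * (w i * (cmod (k i))\<^sup>2)) summable_on UNIV"
      using g k unfolding wfin_def by (intro summable_on_add summable_on_cmult_right)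
    fix i
    from mult_left_mono[OF sq_add_le[OF e, of "g i" "k i"] nn[of i]]
    show "w i * (cmod (g i + k i))\<^sup>2 \<le> (1 + e) * (w i * (cmod (g i))\<^sup>2) + (1 + 1/e) * (w i * (cmod (k i))\<^sup>2)"
      by (simp add: algebra_simps)
  qed
  also have "\<dots> = (1 + e) * wsq w g + (1 + 1/e) * wsq w k"
    using g k unfolding wfin_def wsq_def
    by (subst infsum_add) (auto intro: summable_on_cmult_right simp: infsum_cmult_right)
  finally show ?thesis .
qed

lemma wsq_scale:
  assumes g: "wfin w g"
  shows "wsq w (\<lambda>i. a * g i) = (cmod a)\<^sup>2 * wsq w g"
proof -
  have "wsq w (\<lambda>i. a * g i) = (\<Sum>\<^sub>\<infinity>i. (cmod a)\<^sup>2 * (w i * (cmod (g i))\<^sup>2))"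
    unfolding wsq_def by (simp add: norm_mult power_mult_distrib algebra_simps)
  also have "\<dots> = (cmod a)\<^sup>2 * wsq w g"
    unfolding wsq_def using g unfolding wfin_def by (simp add: infsum_cmult_right)
  finally show ?thesis .
qed

lemma wsq_term:
  assumes nn: "\<And>i. 0 \<le> w i" and g: "wfin w g"
  shows "w i * (cmod (g i))\<^sup>2 \<le> wsq w g"
proof -
  have "(\<Sum>\<^sub>\<infinity>j\<in>{i}. w j * (cmod (g j))\<^sup>2) \<le> wsq w g"
    unfolding wsq_def using g nn unfolding wfin_def
    by (intro infsum_mono_neutral) auto
  then show ?thesis by simp
qed

lemma wsq_parallel:
  assumes nn: "\<And>i. 0 \<le> w i" and g: "wfin w g" and k: "wfin w k"
  shows "wsq w (\<lambda>i. g i + k i) + wsq w (\<lambda>i. g i - k i) = 2 * wsq w g + 2 * wsq w k"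
proof -
  have s1: "wfin w (\<lambda>i. g i + k i)" using wfin_lin[OF nn g k, of 1 1] by simp
  have s2: "wfin w (\<lambda>i. g i - k i)" using wfin_lin[OF nn g k, of 1 "-1"] by simp
  have pt: "(cmod (x + y))\<^sup>2 + (cmod (x - y))\<^sup>2 = 2 * (cmod x)\<^sup>2 + 2 * (cmod y)\<^sup>2" for x y :: complex
    unfolding cmod_power2 by (simp add: power2_eq_square algebra_simps)
  have "wsq w (\<lambda>i. g i + k i) + wsq w (\<lambda>i. g i - k i) =
        (\<Sum>\<^sub>\<infinity>i. w i * (cmod (g i + k i))\<^sup>2 + w i * (cmod (g i - k i))\<^sup>2)"
    using s1 s2 unfolding wsq_def wfin_def by (simp add: infsum_add)
  also have "\<dots> = (\<Sum>\<^sub>\<infinity>i. 2 * (w i * (cmod (g i))\<^sup>2) + 2 * (w i * (cmod (k i))\<^sup>2))"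
  proof (rule infsum_cong)
    fix i
    have "w i * (cmod (g i + k i))\<^sup>2 + w i * (cmod (g i - k i))\<^sup>2 = w i * ((cmod (g i + k i))\<^sup>2 + (cmod (g i - k i))\<^sup>2)"
      by (simp add: distrib_left)
    also have "\<dots> = 2 * (w i * (cmod (g i))\<^sup>2) + 2 * (w i * (cmod (k i))\<^sup>2)"
      by (simp only: pt) (simp add: algebra_simps)
    finally show "w i * (cmod (g i + k i))\<^sup>2 + w i * (cmod (g i - k i))\<^sup>2 = 2 * (w i * (cmod (g i))\<^sup>2) + 2 * (w i * (cmod (k i))\<^sup>2)" .
  qed
  also have "\<dots> = 2 * wsq w g + 2 * wsq w k"
    using g k unfolding wsq_def wfin_def
    by (subst infsum_add) (auto intro: summable_on_cmult_right simp: infsum_cmult_right)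
  finally show ?thesis .
qed

lemma ab_le: "cmod (g::complex) * cmod k \<le> (cmod g)\<^sup>2 + (cmod k)\<^sup>2"
proof -
  have "0 \<le> (cmod g - cmod k)\<^sup>2" by simp
  then have "2 * (cmod g * cmod k) \<le> (cmod g)\<^sup>2 + (cmod k)\<^sup>2" by (simp add: power2_diff)
  moreover have "0 \<le> cmod g * cmod k" by simp
  ultimately show ?thesis by linarith
qed

lemma wip_summable:
  assumes nn: "\<And>i. 0 \<le> w i" and g: "wfin w g" and k: "wfin w k"
  shows "(\<lambda>i. complex_of_real (w i) * (g i * cnj (k i))) summable_on UNIV"
proof (rule cplx_cmp_summable)
  show "(\<lambda>i. w i * (cmod (g i))\<^sup>2 + w i * (cmod (k i))\<^sup>2) summable_on UNIV"
    using g k unfolding wfin_def by (rule summable_on_add)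
  fix i
  have "cmod (g i) * cmod (k i) \<le> (cmod (g i))\<^sup>2 + (cmod (k i))\<^sup>2"
    by (rule ab_le)
  from mult_left_mono[OF this nn[of i]]
  show "cmod (complex_of_real (w i) * (g i * cnj (k i))) \<le> w i * (cmod (g i))\<^sup>2 + w i * (cmod (k i))\<^sup>2"
    using nn[of i] by (simp add: norm_mult algebra_simps)
qed

lemma wsq_expand:
  assumes nn: "\<And>i. 0 \<le> w i" and g: "wfin w g" and k: "wfin w k"
  shows "wsq w (\<lambda>i. g i - t * k i) = wsq w g - 2 * Re (cnj t * wip w g k) + (cmod t)\<^sup>2 * wsq w k"
proof -
  let ?X = "\<lambda>i. complex_of_real (w i) * (g i * cnj (k i))"
  have X: "?X summable_on UNIV" by (rule wip_summable[OF nn g k])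
  have pt: "w i * (cmod (g i - t * k i))\<^sup>2 =
      (w i * (cmod (g i))\<^sup>2 + (cmod t)\<^sup>2 * (w i * (cmod (k i))\<^sup>2)) + (-2) * Re (cnj t * ?X i)" for i
    unfolding cmod_power2 by (simp add: power2_eq_square algebra_simps)
  have A: "(\<lambda>i. w i * (cmod (g i))\<^sup>2 + (cmod t)\<^sup>2 * (w i * (cmod (k i))\<^sup>2)) summable_on UNIV"
    using g k unfolding wfin_def by (intro summable_on_add summable_on_cmult_right)
  have B: "(\<lambda>i. Re (cnj t * ?X i)) summable_on UNIV"
    by (intro summable_on_Re summable_on_cmult_right X)
  have "wsq w (\<lambda>i. g i - t * k i) = (\<Sum>\<^sub>\<infinity>i. (w i * (cmod (g i))\<^sup>2 + (cmod t)\<^sup>2 * (w i * (cmod (k i))\<^sup>2)) + (-2) * Re (cnj t * ?X i))"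
    unfolding wsq_def by (simp only: pt)
  also have "\<dots> = (\<Sum>\<^sub>\<infinity>i. w i * (cmod (g i))\<^sup>2 + (cmod t)\<^sup>2 * (w i * (cmod (k i))\<^sup>2)) + (-2) * (\<Sum>\<^sub>\<infinity>i. Re (cnj t * ?X i))"
  proof -
    have "(\<Sum>\<^sub>\<infinity>i. (w i * (cmod (g i))\<^sup>2 + (cmod t)\<^sup>2 * (w i * (cmod (k i))\<^sup>2)) + (-2) * Re (cnj t * ?X i))
       = (\<Sum>\<^sub>\<infinity>i. w i * (cmod (g i))\<^sup>2 + (cmod t)\<^sup>2 * (w i * (cmod (k i))\<^sup>2)) + (\<Sum>\<^sub>\<infinity>i. (-2) * Re (cnj t * ?X i))"
      by (rule infsum_add[OF A summable_on_cmult_right[OF B]])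
    moreover have "(\<Sum>\<^sub>\<infinity>i. (-2) * Re (cnj t * ?X i)) = (-2) * (\<Sum>\<^sub>\<infinity>i. Re (cnj t * ?X i))"
      using B by (intro infsum_cmult_right) blast
    ultimately show ?thesis by simp
  qed
  also have "(\<Sum>\<^sub>\<infinity>i. w i * (cmod (g i))\<^sup>2 + (cmod t)\<^sup>2 * (w i * (cmod (k i))\<^sup>2)) = wsq w g + (cmod t)\<^sup>2 * wsq w k"
    using g k unfolding wfin_def wsq_def
    by (subst infsum_add) (auto intro: summable_on_cmult_right simp: infsum_cmult_right)
  also have "(\<Sum>\<^sub>\<infinity>i. Re (cnj t * ?X i)) = Re (cnj t * wip w g k)"
  proof -
    have "(\<Sum>\<^sub>\<infinity>i. Re (cnj t * ?X i)) = Re (\<Sum>\<^sub>\<infinity>i. cnj t * ?X i)"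
      by (rule infsum_Re[OF summable_on_cmult_right[OF X]])
    also have "(\<Sum>\<^sub>\<infinity>i. cnj t * ?X i) = cnj t * (\<Sum>\<^sub>\<infinity>i. ?X i)"
      using X by (intro infsum_cmult_right) blast
    finally show ?thesis by (simp only: wip_def)
  qed
  finally show ?thesis by simp
qed

lemma wip_lin:
  assumes nn: "\<And>i. 0 \<le> w i" and g: "wfin w g" and k1: "wfin w k1" and k2: "wfin w k2"
  shows "wip w g (\<lambda>i. k1 i + a * k2 i) = wip w g k1 + cnj a * wip w g k2"
proof -
  have X1: "(\<lambda>i. complex_of_real (w i) * (g i * cnj (k1 i))) summable_on UNIV" by (rule wip_summable[OF nn g k1])
  have X2: "(\<lambda>i. complex_of_real (w i) * (g i * cnj (k2 i))) summable_on UNIV" by (rule wip_summable[OF nn g k2])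
  have "wip w g (\<lambda>i. k1 i + a * k2 i) = (\<Sum>\<^sub>\<infinity>i. complex_of_real (w i) * (g i * cnj (k1 i)) + cnj a * (complex_of_real (w i) * (g i * cnj (k2 i))))"
    unfolding wip_def by (rule infsum_cong) (simp add: algebra_simps)
  also have "\<dots> = wip w g k1 + cnj a * wip w g k2"
    unfolding wip_def using X1 X2 by (simp add: infsum_add summable_on_cmult_right infsum_cmult_right)
  finally show ?thesis .
qed

lemma wfatou:
  assumes nn: "\<And>i. 0 \<le> w i" and G: "\<And>n. wfin w (G n)" "\<And>n. wsq w (G n) \<le> B"
    and lim: "\<And>i. (\<lambda>n. G n i) \<longlonglongrightarrow> L i"
  shows "wfin w L" "wsq w L \<le> B"
proof -
  have fin: "sum (\<lambda>i. w i * (cmod (L i))\<^sup>2) F \<le> B" if "finite F" for F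
  proof -
    have "(\<lambda>n. sum (\<lambda>i. w i * (cmod (G n i))\<^sup>2) F) \<longlonglongrightarrow> sum (\<lambda>i. w i * (cmod (L i))\<^sup>2) F"
      by (intro tendsto_intros lim)
    moreover have "sum (\<lambda>i. w i * (cmod (G n i))\<^sup>2) F \<le> B" for n
    proof -
      have "sum (\<lambda>i. w i * (cmod (G n i))\<^sup>2) F = (\<Sum>\<^sub>\<infinity>i\<in>F. w i * (cmod (G n i))\<^sup>2)" using that by simp
      also have "\<dots> \<le> wsq w (G n)" unfolding wsq_def using G(1)[of n] nn that unfolding wfin_def
        by (intro infsum_mono_neutral) auto
      finally show ?thesis using G(2)[of n] by simp
    qed
    ultimately show ?thesis by (intro LIMSEQ_le_const2) auto
  qed
  show "wfin w L" unfolding wfin_def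
    by (rule nonneg_bdd_above_summable_on) (use nn fin in \<open>auto intro!: bdd_aboveI2\<close>)
  then show "wsq w L \<le> B" unfolding wsq_def wfin_def
    by (rule infsum_le_finite_sums) (use fin in auto)
qed




definition dif :: "('v \<Rightarrow> complex) \<Rightarrow> 'v \<times> 'v \<Rightarrow> complex" where
  "dif f = (\<lambda>p. f (fst p) - f (snd p))"
definition bb :: "('v \<Rightarrow> 'v \<Rightarrow> real) \<Rightarrow> 'v \<times> 'v \<Rightarrow> real" where
  "bb b = (\<lambda>p. b (fst p) (snd p))"
definition DD :: "('v \<Rightarrow> real) \<Rightarrow> ('v \<Rightarrow> 'v \<Rightarrow> real) \<Rightarrow> ('v \<Rightarrow> real) \<Rightarrow> ('v \<Rightarrow> complex) \<Rightarrow> bool" where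
  "DD m b c f \<longleftrightarrow> wfin m f \<and> wfin (bb b) (dif f) \<and> wfin c f"
definition qq :: "('v \<Rightarrow> real) \<Rightarrow> ('v \<Rightarrow> 'v \<Rightarrow> real) \<Rightarrow> ('v \<Rightarrow> real) \<Rightarrow> ('v \<Rightarrow> complex) \<Rightarrow> real" where
  "qq m b c f = 1/2 * wsq (bb b) (dif f) + wsq c f + wsq m f"
definition BB :: "('v \<Rightarrow> real) \<Rightarrow> ('v \<Rightarrow> 'v \<Rightarrow> real) \<Rightarrow> ('v \<Rightarrow> real) \<Rightarrow> ('v \<Rightarrow> complex) \<Rightarrow> ('v \<Rightarrow> complex) \<Rightarrow> complex" where
  "BB m b c f g = 1/2 * wip (bb b) (dif f) (dif g) + wip c f g + wip m f g"
definition delta :: "'v \<Rightarrow> 'v \<Rightarrow> complex" where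
  "delta z = (\<lambda>x. if x = z then 1 else 0)"

lemma dif_lin: "dif (\<lambda>x. a * f x + c * g x) = (\<lambda>p. a * dif f p + c * dif g p)"
  by (rule ext) (simp add: dif_def algebra_simps)

lemma infsum_single:
  fixes f :: "'a \<Rightarrow> 'b::{comm_monoid_add, t2_space}"
  assumes "\<And>x. x \<noteq> z \<Longrightarrow> f x = 0"
  shows "infsum f UNIV = f z" "f summable_on UNIV"
proof -
  have "infsum f UNIV = infsum f {z}" by (rule infsum_cong_neutral) (use assms in auto)
  then show "infsum f UNIV = f z" by simp
  have "f summable_on UNIV \<longleftrightarrow> f summable_on {z}" by (rule summable_on_cong_neutral) (use assms in auto)
  then show "f summable_on UNIV" by simp
qed

lemma supp_row:
  fixes g :: "'v \<Rightarrow> 'a::banach"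
  assumes "g summable_on UNIV"
  shows "(\<lambda>p. if fst p = z then g (snd p) else 0) summable_on UNIV"
        "(\<Sum>\<^sub>\<infinity>p. if fst p = z then g (snd p) else 0) = infsum g UNIV"
proof -
  let ?f = "\<lambda>p. if fst p = z then g (snd p) else 0"
  have inj: "inj_on (Pair z) UNIV" by (auto simp: inj_on_def)
  have e1: "?f summable_on UNIV \<longleftrightarrow> ?f summable_on range (Pair z)"
    by (rule summable_on_cong_neutral) auto
  have e2: "infsum ?f UNIV = infsum ?f (range (Pair z))"
    by (rule infsum_cong_neutral) auto
  have c: "?f \<circ> Pair z = g" by (rule ext) simp
  show "?f summable_on UNIV" using e1 summable_on_reindex[OF inj, of ?f] c assms by simp
  show "infsum ?f UNIV = infsum g UNIV" using e2 infsum_reindex[OF inj, of ?f] c by simp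
qed

lemma supp_col:
  fixes g :: "'v \<Rightarrow> 'a::banach"
  assumes "g summable_on UNIV"
  shows "(\<lambda>p. if snd p = z then g (fst p) else 0) summable_on UNIV"
        "(\<Sum>\<^sub>\<infinity>p. if snd p = z then g (fst p) else 0) = infsum g UNIV"
proof -
  let ?f = "\<lambda>p. if snd p = z then g (fst p) else 0"
  have inj: "inj_on (\<lambda>x. (x, z)) UNIV" by (auto simp: inj_on_def)
  have e1: "?f summable_on UNIV \<longleftrightarrow> ?f summable_on range (\<lambda>x. (x, z))"
    by (rule summable_on_cong_neutral) auto
  have e2: "infsum ?f UNIV = infsum ?f (range (\<lambda>x. (x, z)))"
    by (rule infsum_cong_neutral) auto
  have c: "?f \<circ> (\<lambda>x. (x, z)) = g" by (rule ext) simp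
  show "?f summable_on UNIV" using e1 summable_on_reindex[OF inj, of ?f] c assms by simp
  show "infsum ?f UNIV = infsum g UNIV" using e2 infsum_reindex[OF inj, of ?f] c by simp
qed

lemma row_summable:
  fixes f :: "'v \<times> 'v \<Rightarrow> 'a::banach"
  assumes "f summable_on UNIV"
  shows "(\<lambda>y. f (z, y)) summable_on UNIV"
proof -
  have inj: "inj_on (Pair z) UNIV" by (auto simp: inj_on_def)
  have "f summable_on range (Pair z)" by (rule summable_on_subset_banach[OF assms]) auto
  then show ?thesis using summable_on_reindex[OF inj, of f] by (simp add: comp_def)
qed

lemma t_le_sq: "(t::real) \<le> 1 + t\<^sup>2"
proof -
  have "0 \<le> (t - 1/2)\<^sup>2" by simp
  then show ?thesis by (simp add: power2_eq_square algebra_simps)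
qed

lemma sqrt_eps_tri:
  fixes X A B :: real
  assumes A: "0 \<le> A" and B: "0 \<le> B" and H: "\<And>e. e > 0 \<Longrightarrow> X \<le> (1 + e) * A + (1 + 1/e) * B"
  shows "sqrt X \<le> sqrt A + sqrt B"
proof -
  have "X \<le> (sqrt A + sqrt B)\<^sup>2"
  proof (cases "A > 0 \<and> B > 0")
    case True
    define e where "e = sqrt B / sqrt A"
    have e: "e > 0" using True by (simp add: e_def)
    have "(1 + e) * A = A + sqrt B * (A / sqrt A)" unfolding e_def by (simp add: algebra_simps)
    also have "A / sqrt A = sqrt A" using A by (rule real_div_sqrt)
    finally have 1: "(1 + e) * A = A + sqrt A * sqrt B" by simp
    have "(1 + 1/e) * B = B + sqrt A * (B / sqrt B)" unfolding e_def by (simp add: algebra_simps)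
    also have "B / sqrt B = sqrt B" using B by (rule real_div_sqrt)
    finally have 2: "(1 + 1/e) * B = B + sqrt A * sqrt B" by simp
    have "(sqrt A + sqrt B)\<^sup>2 = A + B + 2 * (sqrt A * sqrt B)" using A B by (simp add: power2_sum)
    moreover note 1 2
    ultimately show ?thesis using H[OF e] by linarith
  next
    case False
    then consider "A = 0" | "B = 0" using A B by linarith
    then show ?thesis
    proof cases
      case 1
      have "X \<le> B + d" if d: "d > 0" for d
      proof -
        have ep: "(B + 1) / d > 0" using d B by simp
        have "X \<le> (1 + 1 / ((B + 1) / d)) * B" using H[OF ep] 1 by simp
        also have "\<dots> = B + d * (B / (B + 1))" using d B by (simp add: field_simps)
        also have "\<dots> \<le> B + d * 1" using d B by (intro add_left_mono mult_left_mono) auto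
        finally show ?thesis by simp
      qed
      then have "X \<le> B" by (rule field_le_epsilon)
      then show ?thesis using 1 B by simp
    next
      case 2
      have "X \<le> A + d" if d: "d > 0" for d
      proof -
        have ep: "d / (A + 1) > 0" using d A by simp
        have "X \<le> (1 + d / (A + 1)) * A" using H[OF ep] 2 by simp
        also have "\<dots> = A + d * (A / (A + 1))" using d A by (simp add: field_simps)
        also have "\<dots> \<le> A + d * 1" using d A by (intro add_left_mono mult_left_mono) auto
        finally show ?thesis by simp
      qed
      then have "X \<le> A" by (rule field_le_epsilon)
      then show ?thesis using 2 A by simp
    qed
  qed
  then have "sqrt X \<le> sqrt ((sqrt A + sqrt B)\<^sup>2)" by (rule real_sqrt_le_mono)
  also have "\<dots> = sqrt A + sqrt B" using A B by simp
  finally show ?thesis .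
qed

locale graph =
  fixes m :: "'v \<Rightarrow> real" and b :: "'v \<Rightarrow> 'v \<Rightarrow> real" and c :: "'v \<Rightarrow> real"
  assumes G: "is_graph m b c"
begin

lemma m_pos: "0 < m x" using G unfolding is_graph_def by blast
lemma m_nn: "0 \<le> m x" using m_pos[of x] by simp
lemma c_nn: "0 \<le> c x" using G unfolding is_graph_def by blast
lemma b_nn: "0 \<le> b x y" using G unfolding is_graph_def by blast
lemma bb_nn: "0 \<le> bb b p" using b_nn by (simp add: bb_def)
lemma b_diag: "b x x = 0" using G unfolding is_graph_def by blast
lemma b_sym: "b x y = b y x" using G unfolding is_graph_def by blast
lemma b_sum: "(\<lambda>y. b x y) summable_on UNIV" using G unfolding is_graph_def by blast

abbreviation "D \<equiv> DD m b c"
abbreviation "q \<equiv> qq m b c"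
abbreviation "B \<equiv> BB m b c"

lemma QN_dom_iff: "u \<in> QN_dom m b c \<longleftrightarrow> D u"
proof -
  have e1: "(\<lambda>(x, y). b x y * (cmod (u x - u y))\<^sup>2) = (\<lambda>i. bb b i * (cmod (dif u i))\<^sup>2)"
    by (rule ext) (simp add: bb_def dif_def case_prod_unfold)
  have e2: "(\<lambda>x. (cmod (u x))\<^sup>2 * m x) = (\<lambda>i. m i * (cmod (u i))\<^sup>2)"
    by (rule ext) (simp add: mult.commute)
  have e3: "(\<lambda>x. c x * (cmod (u x))\<^sup>2) = (\<lambda>i. c i * (cmod (u i))\<^sup>2)" by simp
  show ?thesis unfolding QN_dom_def l2_def DD_def wfin_def mem_Collect_eq by (simp add: e1 e2)
qed

lemma qq_eq: "QN b c u + l2_norm_sq m u = q u"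
proof -
  have e1: "(\<lambda>(x, y). b x y * (cmod (u x - u y))\<^sup>2) = (\<lambda>i. bb b i * (cmod (dif u i))\<^sup>2)"
    by (rule ext) (simp add: bb_def dif_def case_prod_unfold)
  have e2: "(\<lambda>x. (cmod (u x))\<^sup>2 * m x) = (\<lambda>i. m i * (cmod (u i))\<^sup>2)"
    by (rule ext) (simp add: mult.commute)
  show ?thesis unfolding QN_def l2_norm_sq_def qq_def wsq_def e1 e2 by simp
qed

lemma D_lin: "D f \<Longrightarrow> D g \<Longrightarrow> D (\<lambda>x. a * f x + e * g x)"
  unfolding DD_def dif_lin using wfin_lin[of m, OF m_nn] wfin_lin[of "bb b", OF bb_nn] wfin_lin[of c, OF c_nn] by blast

lemma D_diff: "D f \<Longrightarrow> D g \<Longrightarrow> D (\<lambda>x. f x - g x)"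
  using D_lin[of f g 1 "-1"] by simp
lemma D_add: "D f \<Longrightarrow> D g \<Longrightarrow> D (\<lambda>x. f x + g x)"
  using D_lin[of f g 1 1] by simp
lemma D_scale: "D f \<Longrightarrow> D (\<lambda>x. a * f x)"
  using D_lin[of f f a 0] by simp
lemma D_zero: "D (\<lambda>x. 0)"
  by (simp add: DD_def wfin_def dif_def)

lemma comp_nn: "0 \<le> wsq (bb b) (dif f)" "0 \<le> wsq c f" "0 \<le> wsq m f"
  using wsq_nonneg[of "bb b", OF bb_nn] wsq_nonneg[of c, OF c_nn] wsq_nonneg[of m, OF m_nn] by auto

lemma q_nonneg: "0 \<le> q f"
  unfolding qq_def using comp_nn[of f] by simp

lemma q_term: "D f \<Longrightarrow> m x * (cmod (f x))\<^sup>2 \<le> q f"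
  unfolding qq_def DD_def using wsq_term[of m, OF m_nn, of f x] comp_nn[of f] by simp

lemma q_scale: "D f \<Longrightarrow> q (\<lambda>x. a * f x) = (cmod a)\<^sup>2 * q f"
proof -
  assume f: "D f"
  have "dif (\<lambda>x. a * f x) = (\<lambda>p. a * dif f p)" using dif_lin[of a f 0 f] by simp
  then show ?thesis using f unfolding qq_def DD_def by (simp add: wsq_scale algebra_simps)
qed

lemma q_zero: "q (\<lambda>x. 0) = 0"
  by (simp add: qq_def wsq_def dif_def)

lemma q_parallel: "D f \<Longrightarrow> D g \<Longrightarrow> q (\<lambda>x. f x + g x) + q (\<lambda>x. f x - g x) = 2 * q f + 2 * q g"
proof -
  assume f: "D f" and g: "D g"
  have d1: "dif (\<lambda>x. f x + g x) = (\<lambda>p. dif f p + dif g p)" using dif_lin[of 1 f 1 g] by simp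
  have d2: "dif (\<lambda>x. f x - g x) = (\<lambda>p. dif f p - dif g p)" using dif_lin[of 1 f "-1" g] by simp
  have "wsq (bb b) (\<lambda>p. dif f p + dif g p) + wsq (bb b) (\<lambda>p. dif f p - dif g p) = 2 * wsq (bb b) (dif f) + 2 * wsq (bb b) (dif g)"
    using f g unfolding DD_def by (intro wsq_parallel bb_nn) auto
  moreover have "wsq c (\<lambda>p. f p + g p) + wsq c (\<lambda>p. f p - g p) = 2 * wsq c f + 2 * wsq c g"
    using f g unfolding DD_def by (intro wsq_parallel c_nn) auto
  moreover have "wsq m (\<lambda>p. f p + g p) + wsq m (\<lambda>p. f p - g p) = 2 * wsq m f + 2 * wsq m g"
    using f g unfolding DD_def by (intro wsq_parallel m_nn) auto
  ultimately show ?thesis unfolding qq_def d1 d2 by (simp add: algebra_simps)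
qed

lemma q_add_le: "D f \<Longrightarrow> D g \<Longrightarrow> e > 0 \<Longrightarrow> q (\<lambda>x. f x + g x) \<le> (1 + e) * q f + (1 + 1/e) * q g"
proof -
  assume f: "D f" and g: "D g" and e: "e > 0"
  have d1: "dif (\<lambda>x. f x + g x) = (\<lambda>p. dif f p + dif g p)" using dif_lin[of 1 f 1 g] by simp
  have 1: "wsq (bb b) (\<lambda>p. dif f p + dif g p) \<le> (1 + e) * wsq (bb b) (dif f) + (1 + 1/e) * wsq (bb b) (dif g)"
    using f g e unfolding DD_def by (intro wfin_add_le bb_nn) auto
  have 2: "wsq c (\<lambda>p. f p + g p) \<le> (1 + e) * wsq c f + (1 + 1/e) * wsq c g"
    using f g e unfolding DD_def by (intro wfin_add_le c_nn) auto
  have 3: "wsq m (\<lambda>p. f p + g p) \<le> (1 + e) * wsq m f + (1 + 1/e) * wsq m g"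
    using f g e unfolding DD_def by (intro wfin_add_le m_nn) auto
  have "(1 + e) * q f + (1 + 1/e) * q g = 1/2 * ((1 + e) * wsq (bb b) (dif f) + (1 + 1/e) * wsq (bb b) (dif g))
     + ((1 + e) * wsq c f + (1 + 1/e) * wsq c g) + ((1 + e) * wsq m f + (1 + 1/e) * wsq m g)"
    unfolding qq_def using e by (simp add: field_simps)
  moreover have "q (\<lambda>x. f x + g x) = 1/2 * wsq (bb b) (\<lambda>p. dif f p + dif g p) + wsq c (\<lambda>p. f p + g p) + wsq m (\<lambda>p. f p + g p)"
    unfolding qq_def d1 by simp
  moreover have "1/2 * wsq (bb b) (\<lambda>p. dif f p + dif g p) \<le> 1/2 * ((1 + e) * wsq (bb b) (dif f) + (1 + 1/e) * wsq (bb b) (dif g))"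
    using 1 by simp
  ultimately show ?thesis using 2 3 by linarith
qed

lemma q_tri: "D f \<Longrightarrow> D g \<Longrightarrow> sqrt (q (\<lambda>x. f x + g x)) \<le> sqrt (q f) + sqrt (q g)"
  by (rule sqrt_eps_tri[OF q_nonneg q_nonneg]) (rule q_add_le)

lemma q_expand: "D f \<Longrightarrow> D g \<Longrightarrow> q (\<lambda>x. f x - t * g x) = q f - 2 * Re (cnj t * B f g) + (cmod t)\<^sup>2 * q g"
proof -
  assume f: "D f" and g: "D g"
  have d1: "dif (\<lambda>x. f x - t * g x) = (\<lambda>p. dif f p - t * dif g p)" using dif_lin[of 1 f "-t" g] by simp
  have 1: "wsq (bb b) (\<lambda>p. dif f p - t * dif g p) = wsq (bb b) (dif f) - 2 * Re (cnj t * wip (bb b) (dif f) (dif g)) + (cmod t)\<^sup>2 * wsq (bb b) (dif g)"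
    using f g unfolding DD_def by (intro wsq_expand bb_nn) auto
  have 2: "wsq c (\<lambda>p. f p - t * g p) = wsq c f - 2 * Re (cnj t * wip c f g) + (cmod t)\<^sup>2 * wsq c g"
    using f g unfolding DD_def by (intro wsq_expand c_nn) auto
  have 3: "wsq m (\<lambda>p. f p - t * g p) = wsq m f - 2 * Re (cnj t * wip m f g) + (cmod t)\<^sup>2 * wsq m g"
    using f g unfolding DD_def by (intro wsq_expand m_nn) auto
  have "Re (cnj t * B f g) = 1/2 * Re (cnj t * wip (bb b) (dif f) (dif g)) + Re (cnj t * wip c f g) + Re (cnj t * wip m f g)"
    unfolding BB_def by (simp add: algebra_simps)
  then show ?thesis unfolding qq_def d1 1 2 3 by (simp add: algebra_simps)
qed

lemma B_lin: "D f \<Longrightarrow> D g1 \<Longrightarrow> D g2 \<Longrightarrow> B f (\<lambda>x. g1 x + a * g2 x) = B f g1 + cnj a * B f g2"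
proof -
  assume f: "D f" and g1: "D g1" and g2: "D g2"
  have d1: "dif (\<lambda>x. g1 x + a * g2 x) = (\<lambda>p. dif g1 p + a * dif g2 p)" using dif_lin[of 1 g1 a g2] by simp
  have 1: "wip (bb b) (dif f) (\<lambda>p. dif g1 p + a * dif g2 p) = wip (bb b) (dif f) (dif g1) + cnj a * wip (bb b) (dif f) (dif g2)"
    using f g1 g2 unfolding DD_def by (intro wip_lin bb_nn) auto
  have 2: "wip c f (\<lambda>p. g1 p + a * g2 p) = wip c f g1 + cnj a * wip c f g2"
    using f g1 g2 unfolding DD_def by (intro wip_lin c_nn) auto
  have 3: "wip m f (\<lambda>p. g1 p + a * g2 p) = wip m f g1 + cnj a * wip m f g2"
    using f g1 g2 unfolding DD_def by (intro wip_lin m_nn) auto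
  show ?thesis unfolding BB_def d1 1 2 3 by (simp add: algebra_simps)
qed

lemma B_zero: "B f (\<lambda>x. 0) = 0"
  by (simp add: BB_def wip_def dif_def)

lemma q_fatou:
  assumes GD: "\<And>n. D (Gs n)" and Gb: "\<And>n. q (Gs n) \<le> K" and lim: "\<And>x. (\<lambda>n. Gs n x) \<longlonglongrightarrow> L x"
  shows "D L" "q L \<le> 3 * K"
proof -
  have n1: "0 \<le> wsq (bb b) (dif f)" "0 \<le> wsq c f" "0 \<le> wsq m f" for f
    using wsq_nonneg[of "bb b", OF bb_nn] wsq_nonneg[of c, OF c_nn] wsq_nonneg[of m, OF m_nn] by auto
  have b1: "wsq (bb b) (dif (Gs n)) \<le> 2 * K" "wsq c (Gs n) \<le> K" "wsq m (Gs n) \<le> K" for n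
    using Gb[of n] n1[of "Gs n"] unfolding qq_def by auto
  have limd: "(\<lambda>n. dif (Gs n) p) \<longlonglongrightarrow> dif L p" for p
    unfolding dif_def by (intro tendsto_diff lim)
  have r1: "wfin (bb b) (dif L)" "wsq (bb b) (dif L) \<le> 2 * K"
    using wfatou[of "bb b" "\<lambda>n. dif (Gs n)" "2 * K" "dif L", OF bb_nn] GD b1 limd unfolding DD_def by auto
  have r2: "wfin c L" "wsq c L \<le> K"
    using wfatou[of c Gs K L, OF c_nn] GD b1 lim unfolding DD_def by auto
  have r3: "wfin m L" "wsq m L \<le> K"
    using wfatou[of m Gs K L, OF m_nn] GD b1 lim unfolding DD_def by auto
  show "D L" using r1 r2 r3 unfolding DD_def by auto
  show "q L \<le> 3 * K" using r1 r2 r3 unfolding qq_def by auto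
qed

lemma q_neg: "D f \<Longrightarrow> q (\<lambda>x. g x - f x) = q (\<lambda>x. f x - g x)" if "D g"
proof -
  assume "D f"
  then have "D (\<lambda>x. f x - g x)" using D_diff that by blast
  from q_scale[OF this, of "-1"] show ?thesis by simp
qed

lemma q_cont:
  assumes F: "\<And>n. D (F n)" and L: "D L" and lim: "(\<lambda>n. q (\<lambda>x. F n x - L x)) \<longlonglongrightarrow> 0"
  shows "(\<lambda>n. q (F n)) \<longlonglongrightarrow> q L"
proof -
  let ?s = "\<lambda>n. sqrt (q (\<lambda>x. F n x - L x))"
  have s0: "?s \<longlonglongrightarrow> 0" using tendsto_real_sqrt[OF lim] by simp
  have up: "sqrt (q (F n)) \<le> sqrt (q L) + ?s n" for n
  proof -
    have "sqrt (q (\<lambda>x. L x + (F n x - L x))) \<le> sqrt (q L) + ?s n"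
      by (rule q_tri[OF L D_diff[OF F L]])
    then show ?thesis by simp
  qed
  have lo: "sqrt (q L) - ?s n \<le> sqrt (q (F n))" for n
  proof -
    have "sqrt (q (\<lambda>x. F n x + (L x - F n x))) \<le> sqrt (q (F n)) + sqrt (q (\<lambda>x. L x - F n x))"
      by (rule q_tri[OF F D_diff[OF L F]])
    moreover have "q (\<lambda>x. L x - F n x) = q (\<lambda>x. F n x - L x)" using q_neg[OF F L] q_neg[OF L F] by auto
    ultimately show ?thesis by simp
  qed
  have "(\<lambda>n. sqrt (q (F n))) \<longlonglongrightarrow> sqrt (q L)"
  proof (rule tendsto_sandwich[of "\<lambda>n. sqrt (q L) - ?s n" _ _ "\<lambda>n. sqrt (q L) + ?s n"])
    show "\<forall>\<^sub>F n in sequentially. sqrt (q L) - ?s n \<le> sqrt (q (F n))" using lo by simp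
    show "\<forall>\<^sub>F n in sequentially. sqrt (q (F n)) \<le> sqrt (q L) + ?s n" using up by simp
    show "(\<lambda>n. sqrt (q L) - ?s n) \<longlonglongrightarrow> sqrt (q L)" using tendsto_diff[OF tendsto_const s0] by simp
    show "(\<lambda>n. sqrt (q L) + ?s n) \<longlonglongrightarrow> sqrt (q L)" using tendsto_add[OF tendsto_const s0] by simp
  qed
  from tendsto_power[OF this, of 2] show ?thesis using q_nonneg by simp
qed

end



context graph begin

lemma b_sum': "(\<lambda>x. b x z) summable_on UNIV"
proof -
  have "(\<lambda>x. b x z) = (\<lambda>x. b z x)" by (rule ext) (rule b_sym)
  then show ?thesis using b_sum[of z] by simp
qed

lemma row_sq_summable: "D u \<Longrightarrow> (\<lambda>y. b z y * (cmod (u z - u y))\<^sup>2) summable_on UNIV"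
proof -
  assume "D u"
  then have "(\<lambda>p. bb b p * (cmod (dif u p))\<^sup>2) summable_on UNIV" unfolding DD_def wfin_def by simp
  from row_summable[OF this, of z] show ?thesis by (simp add: bb_def dif_def)
qed

lemma row_summable_S: "D u \<Longrightarrow> (\<lambda>y. complex_of_real (b z y) * (u z - u y)) summable_on UNIV"
proof -
  assume u: "D u"
  show ?thesis
  proof (rule cplx_cmp_summable)
    show "(\<lambda>y. b z y + b z y * (cmod (u z - u y))\<^sup>2) summable_on UNIV"
      by (intro summable_on_add b_sum row_sq_summable[OF u])
    fix y
    have "b z y * cmod (u z - u y) \<le> b z y * (1 + (cmod (u z - u y))\<^sup>2)"
      by (intro mult_left_mono t_le_sq b_nn)
    then show "cmod (complex_of_real (b z y) * (u z - u y)) \<le> b z y + b z y * (cmod (u z - u y))\<^sup>2"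
      using b_nn[of z y] by (simp add: norm_mult abs_of_nonneg distrib_left)
  qed
qed

lemma D_Ftilde: "D u \<Longrightarrow> u \<in> Ftilde b"
proof -
  assume u: "D u"
  show ?thesis unfolding Ftilde_def
  proof (safe)
    fix x
    show "(\<lambda>y. cmod (complex_of_real (b x y) * u y)) summable_on UNIV"
    proof (rule real_cmp_summable)
      show "(\<lambda>y. (cmod (u x) + 1) * b x y + b x y * (cmod (u x - u y))\<^sup>2) summable_on UNIV"
        by (intro summable_on_add summable_on_cmult_right b_sum row_sq_summable[OF u])
      fix y
      show "0 \<le> cmod (complex_of_real (b x y) * u y)" by simp
      have "cmod (u y) \<le> cmod (u x) + cmod (u x - u y)"
        by (metis norm_minus_commute norm_triangle_sub)
      also have "\<dots> \<le> cmod (u x) + (1 + (cmod (u x - u y))\<^sup>2)" using t_le_sq by simp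
      finally have "b x y * cmod (u y) \<le> b x y * (cmod (u x) + (1 + (cmod (u x - u y))\<^sup>2))"
        by (intro mult_left_mono b_nn)
      then show "cmod (complex_of_real (b x y) * u y) \<le> (cmod (u x) + 1) * b x y + b x y * (cmod (u x - u y))\<^sup>2"
        using b_nn[of x y] by (simp add: norm_mult algebra_simps)
    qed
  qed
qed

lemma wip_delta: "wip w u (delta z) = complex_of_real (w z) * u z"
proof -
  have "wip w u (delta z) = (\<lambda>i. complex_of_real (w i) * (u i * cnj (delta z i))) z"
    unfolding wip_def by (rule infsum_single(1)) (simp add: delta_def)
  then show ?thesis by (simp add: delta_def)
qed

lemma wfin_delta: "wfin w (delta z)"
  unfolding wfin_def by (rule infsum_single(2)[where z=z]) (simp add: delta_def)

lemma D_delta: "D (delta z)"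
proof -
  have "(\<lambda>p. bb b p * (cmod (dif (delta z) p))\<^sup>2) summable_on UNIV"
  proof (rule real_cmp_summable)
    show "(\<lambda>p. (if fst p = z then b z (snd p) else 0) + (if snd p = z then b (fst p) z else 0)) summable_on UNIV"
      by (intro summable_on_add supp_row(1) supp_col(1) b_sum b_sum')
    fix p :: "'v \<times> 'v"
    show "0 \<le> bb b p * (cmod (dif (delta z) p))\<^sup>2" using bb_nn[of p] by simp
    show "bb b p * (cmod (dif (delta z) p))\<^sup>2 \<le> (if fst p = z then b z (snd p) else 0) + (if snd p = z then b (fst p) z else 0)"
      using b_nn[of "fst p" "snd p"] b_diag[of z] by (cases p) (auto simp: bb_def dif_def delta_def)
  qed
  then show ?thesis unfolding DD_def using wfin_delta[of m z] wfin_delta[of c z] by (simp add: wfin_def)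
qed

lemma green_point:
  assumes u: "D u"
  shows "B u (delta z) = complex_of_real (m z) * (Ltilde m b c u z + u z)"
proof -
  define S where "S = (\<Sum>\<^sub>\<infinity>y. complex_of_real (b z y) * (u z - u y))"
  have RS: "(\<lambda>y. complex_of_real (b z y) * (u z - u y)) summable_on UNIV" by (rule row_summable_S[OF u])
  have RS': "(\<lambda>x. complex_of_real (b x z) * (u z - u x)) summable_on UNIV"
    using RS by (simp add: b_sym)
  let ?A = "\<lambda>p. if fst p = z then complex_of_real (b z (snd p)) * (u z - u (snd p)) else 0"
  let ?A' = "\<lambda>p. if snd p = z then complex_of_real (b (fst p) z) * (u z - u (fst p)) else 0"
  have pt: "complex_of_real (bb b p) * (dif u p * cnj (dif (delta z) p)) = ?A p + ?A' p" for p
    using b_diag[of z] by (cases p) (auto simp: bb_def dif_def delta_def algebra_simps)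
  have "wip (bb b) (dif u) (dif (delta z)) = (\<Sum>\<^sub>\<infinity>p. ?A p + ?A' p)"
    unfolding wip_def by (simp only: pt)
  also have "\<dots> = infsum ?A UNIV + infsum ?A' UNIV"
    by (rule infsum_add[OF supp_row(1)[OF RS] supp_col(1)[OF RS']])
  also have "infsum ?A UNIV = S" unfolding S_def by (rule supp_row(2)[OF RS])
  also have "infsum ?A' UNIV = S" unfolding S_def using supp_col(2)[OF RS'] by (simp add: b_sym)
  finally have E: "wip (bb b) (dif u) (dif (delta z)) = 2 * S" by simp
  have "B u (delta z) = S + complex_of_real (c z) * u z + complex_of_real (m z) * u z"
    unfolding BB_def E wip_delta by simp
  moreover have "Ltilde m b c u z = complex_of_real (1 / m z) * S + complex_of_real (c z / m z) * u z"
    unfolding Ltilde_def S_def by simp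
  moreover have "m z \<noteq> 0" using m_pos[of z] by simp
  ultimately show ?thesis by (simp add: field_simps)
qed

lemma finsupp_decomp:
  assumes "\<phi> \<in> finsupp"
  shows "\<phi> = (\<lambda>x. \<Sum>z\<in>{x. \<phi> x \<noteq> 0}. \<phi> z * delta z x)"
proof (rule ext)
  fix x
  have fin: "finite {x. \<phi> x \<noteq> 0}" using assms by (simp add: finsupp_def)
  have "(\<Sum>z\<in>{x. \<phi> x \<noteq> 0}. \<phi> z * delta z x) = (\<Sum>z\<in>{x. \<phi> x \<noteq> 0}. if z = x then \<phi> z else 0)"
    by (rule sum.cong) (auto simp: delta_def)
  also have "\<dots> = (if x \<in> {x. \<phi> x \<noteq> 0} then \<phi> x else 0)" using fin by (simp add: sum.delta)
  also have "\<dots> = \<phi> x" by simp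
  finally show "\<phi> x = (\<Sum>z\<in>{x. \<phi> x \<noteq> 0}. \<phi> z * delta z x)" by simp
qed

lemma sum_delta_D_B:
  assumes u: "D u" and F: "finite F"
  shows "D (\<lambda>x. \<Sum>z\<in>F. a z * delta z x) \<and> B u (\<lambda>x. \<Sum>z\<in>F. a z * delta z x) = (\<Sum>z\<in>F. cnj (a z) * B u (delta z))"
  using F
proof (induction F rule: finite_induct)
  case empty
  then show ?case using D_zero B_zero by simp
next
  case (insert y F)
  let ?g = "\<lambda>x. \<Sum>z\<in>F. a z * delta z x"
  have eq: "(\<lambda>x. \<Sum>z\<in>insert y F. a z * delta z x) = (\<lambda>x. ?g x + a y * delta y x)"
    using insert by (simp add: algebra_simps)
  have Dg: "D ?g" using insert by simp
  show ?case unfolding eq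
    using D_lin[OF Dg D_delta, of 1 "a y"] B_lin[OF u Dg D_delta, of "a y"] insert by (simp add: algebra_simps)
qed

lemma finsupp_D: "\<phi> \<in> finsupp \<Longrightarrow> D \<phi>"
  using finsupp_decomp[of \<phi>] sum_delta_D_B[OF D_zero, of "{x. \<phi> x \<noteq> 0}" \<phi>] by (simp add: finsupp_def)

definition harm :: "('v \<Rightarrow> complex) \<Rightarrow> bool" where
  "harm u \<longleftrightarrow> D u \<and> (\<forall>x. Ltilde m b c u x + u x = 0)"

lemma harm_B_finsupp:
  assumes h: "harm u" and \<phi>: "\<phi> \<in> finsupp"
  shows "B u \<phi> = 0"
proof -
  have u: "D u" using h by (simp add: harm_def)
  have "B u \<phi> = (\<Sum>z\<in>{x. \<phi> x \<noteq> 0}. cnj (\<phi> z) * B u (delta z))"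
    using finsupp_decomp[OF \<phi>] sum_delta_D_B[OF u, of "{x. \<phi> x \<noteq> 0}" \<phi>] \<phi> by (simp add: finsupp_def)
  also have "\<dots> = 0" using h green_point[OF u] by (simp add: harm_def)
  finally show ?thesis .
qed

lemma harm_finsupp_le:
  assumes h: "harm u" and \<phi>: "\<phi> \<in> finsupp"
  shows "q u \<le> q (\<lambda>x. u x - \<phi> x)"
proof -
  have u: "D u" using h by (simp add: harm_def)
  have "q (\<lambda>x. u x - 1 * \<phi> x) = q u - 2 * Re (cnj 1 * B u \<phi>) + (cmod 1)\<^sup>2 * q \<phi>"
    by (rule q_expand[OF u finsupp_D[OF \<phi>]])
  then show ?thesis using harm_B_finsupp[OF h \<phi>] q_nonneg[of \<phi>] by simp
qed

lemma QD_unfold: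
  assumes "v \<in> QD_dom m b c"
  shows "D v" "\<exists>\<phi>. (\<forall>n. \<phi> n \<in> finsupp \<and> D (\<lambda>x. v x - \<phi> n x)) \<and> (\<lambda>n. q (\<lambda>x. v x - \<phi> n x)) \<longlonglongrightarrow> 0"
  using assms unfolding QD_dom_def by (auto simp: QN_dom_iff qq_eq)

lemma QD_intro:
  assumes "D v" "\<And>n. \<phi> n \<in> finsupp" "\<And>n. D (\<lambda>x. v x - \<phi> n x)" "(\<lambda>n. q (\<lambda>x. v x - \<phi> n x)) \<longlonglongrightarrow> 0"
  shows "v \<in> QD_dom m b c"
  using assms unfolding QD_dom_def by (auto simp: QN_dom_iff qq_eq)

lemma harm_QD_le:
  assumes h: "harm u" and v: "v \<in> QD_dom m b c"
  shows "q u \<le> q (\<lambda>x. u x - v x)"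
proof -
  have u: "D u" using h by (simp add: harm_def)
  have Dv: "D v" by (rule QD_unfold(1)[OF v])
  obtain \<phi> where \<phi>: "\<And>n. \<phi> n \<in> finsupp" "\<And>n. D (\<lambda>x. v x - \<phi> n x)"
    and lim: "(\<lambda>n. q (\<lambda>x. v x - \<phi> n x)) \<longlonglongrightarrow> 0"
    using QD_unfold(2)[OF v] by blast
  have F: "D (\<lambda>x. u x - \<phi> n x)" for n using D_diff[OF u finsupp_D[OF \<phi>(1)]] .
  have L: "D (\<lambda>x. u x - v x)" using D_diff[OF u Dv] .
  have eq: "(\<lambda>x. (u x - \<phi> n x) - (u x - v x)) = (\<lambda>x. v x - \<phi> n x)" for n by auto
  have "(\<lambda>n. q (\<lambda>x. u x - \<phi> n x)) \<longlonglongrightarrow> q (\<lambda>x. u x - v x)"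
    by (rule q_cont[OF F L]) (simp add: eq lim)
  moreover have "q u \<le> q (\<lambda>x. u x - \<phi> n x)" for n by (rule harm_finsupp_le[OF h \<phi>(1)])
  ultimately show ?thesis by (intro LIMSEQ_le_const) auto
qed

end



definition en :: "nat \<Rightarrow> real" where "en n = inverse (real (Suc n))"

lemma en_pos: "0 < en n" by (simp add: en_def)
lemma en_mono: "n \<le> k \<Longrightarrow> en k \<le> en n" by (simp add: en_def field_simps)
lemma en_lim: "en \<longlonglongrightarrow> 0" unfolding en_def by (rule LIMSEQ_inverse_real_of_nat)

lemma finsupp_lin: "\<phi> \<in> finsupp \<Longrightarrow> \<psi> \<in> finsupp \<Longrightarrow> (\<lambda>x. a * \<phi> x + e * \<psi> x) \<in> finsupp"
  unfolding finsupp_def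
  by (auto intro: finite_subset[of _ "{x. \<phi> x \<noteq> 0} \<union> {x. \<psi> x \<noteq> 0}"])

lemma finsupp_delta: "delta z \<in> finsupp"
  unfolding finsupp_def delta_def by (auto intro: finite_subset[of _ "{z}"])

lemma finsupp_zero: "(\<lambda>x. 0) \<in> finsupp" by (simp add: finsupp_def)

lemma cauchy_en:
  fixes a :: "nat \<Rightarrow> complex"
  assumes M: "0 < M" and H: "\<And>n k. M * (cmod (a n - a k))\<^sup>2 \<le> 2 * en n + 2 * en k"
  shows "convergent a"
proof -
  have "Cauchy a"
  proof (rule CauchyI)
    fix e :: real assume e: "0 < e"
    obtain N where N: "4 / (M * e\<^sup>2) < real N" using reals_Archimedean2 by blast
    have eN: "4 * en N < M * e\<^sup>2"
    proof -
      have pos: "0 < M * e\<^sup>2" using M e by simp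
      have "4 / (M * e\<^sup>2) < real (Suc N)" using N by simp
      then have "4 < real (Suc N) * (M * e\<^sup>2)" using pos by (simp add: divide_less_eq)
      then show ?thesis unfolding en_def by (simp add: field_simps)
    qed
    show "\<exists>N. \<forall>m\<ge>N. \<forall>n\<ge>N. norm (a m - a n) < e"
    proof (intro exI allI impI)
      fix n k assume n: "N \<le> n" and k: "N \<le> k"
      have "M * (cmod (a n - a k))\<^sup>2 \<le> 2 * en n + 2 * en k" by (rule H)
      also have "\<dots> \<le> 4 * en N" using en_mono[OF n] en_mono[OF k] by simp
      also have "\<dots> < M * e\<^sup>2" by (rule eN)
      finally have "(cmod (a n - a k))\<^sup>2 < e\<^sup>2" using M by simp
      then show "norm (a n - a k) < e" using e by (simp add: power_less_imp_less_base)
    qed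
  qed
  then show ?thesis by (simp add: Cauchy_convergent_iff)
qed

context graph begin

lemma minimize:
  assumes w: "D w" and nQD: "w \<notin> QD_dom m b c"
    and \<phi>: "\<And>n. \<phi> n \<in> finsupp" and low: "\<And>\<psi>. \<psi> \<in> finsupp \<Longrightarrow> d \<le> q (\<lambda>x. w x - \<psi> x)"
    and up: "\<And>n. q (\<lambda>x. w x - \<phi> n x) \<le> d + en n"
  shows "\<exists>h. harm h \<and> h \<noteq> (\<lambda>x. 0) \<and> (\<forall>x. (\<lambda>n. w x - \<phi> n x) \<longlonglongrightarrow> h x)"
proof -
  define H where "H n = (\<lambda>x. w x - \<phi> n x)" for n
  have HD: "D (H n)" for n unfolding H_def by (rule D_diff[OF w finsupp_D[OF \<phi>]])
  have cq: "q (\<lambda>x. H n x - H k x) \<le> 2 * en n + 2 * en k" for n k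
  proof -
    have par: "q (\<lambda>x. H n x + H k x) + q (\<lambda>x. H n x - H k x) = 2 * q (H n) + 2 * q (H k)"
      by (rule q_parallel[OF HD HD])
    have "q (\<lambda>x. (1/2) * (H n x + H k x)) = (cmod (1/2))\<^sup>2 * q (\<lambda>x. H n x + H k x)"
      by (rule q_scale[OF D_add[OF HD HD]])
    then have half: "q (\<lambda>x. H n x + H k x) = 4 * q (\<lambda>x. (1/2) * (H n x + H k x))"
      by (simp add: power2_eq_square)
    have eqw: "(\<lambda>x. (1/2) * (H n x + H k x)) = (\<lambda>x. w x - ((1/2) * \<phi> n x + (1/2) * \<phi> k x))"
      by (rule ext) (simp add: H_def algebra_simps)
    have "d \<le> q (\<lambda>x. (1/2) * (H n x + H k x))"
      unfolding eqw by (rule low[OF finsupp_lin[OF \<phi> \<phi>]])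
    then show ?thesis using par half up[of n] up[of k] unfolding H_def by linarith
  qed
  have conv: "convergent (\<lambda>n. H n x)" for x
  proof (rule cauchy_en[of "m x"])
    show "0 < m x" by (rule m_pos)
    fix n k
    have "m x * (cmod ((\<lambda>x. H n x - H k x) x))\<^sup>2 \<le> q (\<lambda>x. H n x - H k x)"
      by (rule q_term[OF D_diff[OF HD HD]])
    then show "m x * (cmod (H n x - H k x))\<^sup>2 \<le> 2 * en n + 2 * en k" using cq[of n k] by simp
  qed
  define h where "h x = lim (\<lambda>n. H n x)" for x
  have Hlim: "(\<lambda>n. H n x) \<longlonglongrightarrow> h x" for x
    unfolding h_def using conv[of x] by (simp add: convergent_LIMSEQ_iff)
  have fat: "D (\<lambda>x. H n x - h x) \<and> q (\<lambda>x. H n x - h x) \<le> 3 * (4 * en n)" for n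
  proof -
    have a: "D (\<lambda>x. H n x - H (k + n) x)" for k by (rule D_diff[OF HD HD])
    have bnd: "q (\<lambda>x. H n x - H (k + n) x) \<le> 4 * en n" for k
      using cq[of n "k + n"] en_mono[of n "k + n"] by simp
    have l: "(\<lambda>k. H n x - H (k + n) x) \<longlonglongrightarrow> H n x - h x" for x
      by (intro tendsto_diff tendsto_const LIMSEQ_ignore_initial_segment Hlim)
    show ?thesis using q_fatou[OF a bnd l] by simp
  qed
  have Dh: "D h"
  proof -
    have "D (\<lambda>x. H 0 x - (H 0 x - h x))" by (rule D_diff[OF HD]) (use fat in blast)
    then show ?thesis by simp
  qed
  have lim0: "(\<lambda>n. q (\<lambda>x. H n x - h x)) \<longlonglongrightarrow> 0"
  proof (rule tendsto_sandwich[of "\<lambda>n. 0" _ _ "\<lambda>n. 12 * en n"])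
    show "\<forall>\<^sub>F n in sequentially. 0 \<le> q (\<lambda>x. H n x - h x)" using q_nonneg by simp
    show "\<forall>\<^sub>F n in sequentially. q (\<lambda>x. H n x - h x) \<le> 12 * en n" using fat by simp
    show "(\<lambda>n. 0::real) \<longlonglongrightarrow> 0" by simp
    show "(\<lambda>n. 12 * en n) \<longlonglongrightarrow> 0" using tendsto_mult[OF tendsto_const en_lim, of 12] by simp
  qed
  have hne: "h \<noteq> (\<lambda>x. 0)"
  proof
    assume h0: "h = (\<lambda>x. 0)"
    have "(\<lambda>x. w x - h x) \<in> QD_dom m b c"
    proof (rule QD_intro[of _ \<phi>])
      show "D (\<lambda>x. w x - h x)" by (rule D_diff[OF w Dh])
      show "\<phi> n \<in> finsupp" for n by (rule \<phi>)
      have eq: "(\<lambda>x. w x - h x - \<phi> n x) = (\<lambda>x. H n x - h x)" for n by (rule ext) (simp add: H_def)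
      show "D (\<lambda>x. w x - h x - \<phi> n x)" for n unfolding eq using fat by blast
      show "(\<lambda>n. q (\<lambda>x. w x - h x - \<phi> n x)) \<longlonglongrightarrow> 0" unfolding eq by (rule lim0)
    qed
    then show False using nQD h0 by simp
  qed
  have qh: "q h = d"
  proof -
    have "(\<lambda>n. q (H n)) \<longlonglongrightarrow> q h" by (rule q_cont[OF HD Dh lim0])
    moreover have "(\<lambda>n. q (H n)) \<longlonglongrightarrow> d"
    proof (rule tendsto_sandwich[of "\<lambda>n. d" _ _ "\<lambda>n. d + en n"])
      show "\<forall>\<^sub>F n in sequentially. d \<le> q (H n)" unfolding H_def using low[OF \<phi>] by simp
      show "\<forall>\<^sub>F n in sequentially. q (H n) \<le> d + en n" unfolding H_def using up by simp
      show "(\<lambda>n. d) \<longlonglongrightarrow> d" by simp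
      show "(\<lambda>n. d + en n) \<longlonglongrightarrow> d" using tendsto_add[OF tendsto_const en_lim, of d] by simp
    qed
    ultimately show ?thesis using LIMSEQ_unique by blast
  qed
  have harmh: "Ltilde m b c h z + h z = 0" for z
  proof -
    define P where "P = B h (delta z)"
    define K where "K = q (delta z)"
    have K0: "0 \<le> K" unfolding K_def by (rule q_nonneg)
    have ineq: "d \<le> q (\<lambda>x. h x - t * delta z x)" for t
    proof -
      have F: "D (\<lambda>x. H n x - t * delta z x)" for n
        using D_lin[of "H n" "delta z" 1 "-t", OF HD D_delta] by simp
      have L: "D (\<lambda>x. h x - t * delta z x)" using D_lin[of h "delta z" 1 "-t", OF Dh D_delta] by simp
      have eq: "(\<lambda>x. (H n x - t * delta z x) - (h x - t * delta z x)) = (\<lambda>x. H n x - h x)" for n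
        by (rule ext) simp
      have "(\<lambda>n. q (\<lambda>x. H n x - t * delta z x)) \<longlonglongrightarrow> q (\<lambda>x. h x - t * delta z x)"
        by (rule q_cont[OF F L]) (simp only: eq lim0)
      moreover have "d \<le> q (\<lambda>x. H n x - t * delta z x)" for n
      proof -
        have eq2: "(\<lambda>x. H n x - t * delta z x) = (\<lambda>x. w x - (1 * \<phi> n x + t * delta z x))"
          by (rule ext) (simp add: H_def)
        show ?thesis unfolding eq2 by (rule low[OF finsupp_lin[OF \<phi> finsupp_delta]])
      qed
      ultimately show ?thesis by (intro LIMSEQ_le_const) auto
    qed
    have exp: "q (\<lambda>x. h x - t * delta z x) = d - 2 * Re (cnj t * P) + (cmod t)\<^sup>2 * K" for t
      unfolding P_def K_def qh[symmetric] by (rule q_expand[OF Dh D_delta])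
    define s where "s = 1 / (K + 1)"
    have s: "0 < s" "s * K < 1" using K0 by (simp_all add: s_def field_simps)
    define t where "t = complex_of_real s * P"
    have "0 \<le> - 2 * Re (cnj t * P) + (cmod t)\<^sup>2 * K" using ineq[of t] exp[of t] by simp
    moreover have "Re (cnj t * P) = s * (cmod P)\<^sup>2"
    proof -
      have "cnj t * P = complex_of_real s * (P * cnj P)" unfolding t_def by (simp add: algebra_simps)
      also have "P * cnj P = complex_of_real ((cmod P)\<^sup>2)" by (rule complex_norm_square[symmetric])
      finally show ?thesis by simp
    qed
    moreover have "(cmod t)\<^sup>2 = s\<^sup>2 * (cmod P)\<^sup>2" unfolding t_def using s by (simp add: norm_mult power_mult_distrib)
    ultimately have "0 \<le> s * (cmod P)\<^sup>2 * (s * K - 2)" by (simp add: algebra_simps power2_eq_square)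
    moreover have "(cmod P)\<^sup>2 > 0 \<Longrightarrow> s * (cmod P)\<^sup>2 * (s * K - 2) < 0"
      using s by (intro mult_pos_neg) auto
    ultimately have "(cmod P)\<^sup>2 \<le> 0" by force
    then have "P = 0" by simp
    then have "complex_of_real (m z) * (Ltilde m b c h z + h z) = 0"
      using green_point[OF Dh, of z] unfolding P_def by simp
    then show ?thesis using m_pos[of z] by simp
  qed
  show ?thesis
    using Dh harmh hne Hlim unfolding harm_def H_def by blast
qed

lemma exists_minseq:
  assumes w: "D w"
  shows "\<exists>d \<phi>. (\<forall>n. \<phi> n \<in> finsupp) \<and> (\<forall>\<psi>\<in>finsupp. d \<le> q (\<lambda>x. w x - \<psi> x)) \<and> (\<forall>n. q (\<lambda>x. w x - \<phi> n x) \<le> d + en n)"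
proof -
  define S where "S = (\<lambda>\<psi>. q (\<lambda>x. w x - \<psi> x)) ` finsupp"
  define d where "d = Inf S"
  have ne: "S \<noteq> {}" unfolding S_def using finsupp_zero by blast
  have bdd: "bdd_below S" unfolding S_def using q_nonneg by (intro bdd_belowI[of _ 0]) auto
  have low: "\<forall>\<psi>\<in>finsupp. d \<le> q (\<lambda>x. w x - \<psi> x)"
    unfolding d_def S_def using bdd S_def by (auto intro: cInf_lower)
  have "\<forall>n. \<exists>\<psi>. \<psi> \<in> finsupp \<and> q (\<lambda>x. w x - \<psi> x) \<le> d + en n"
  proof
    fix n
    have "Inf S < d + en n" using en_pos[of n] unfolding d_def by simp
    then obtain y where "y \<in> S" "y < d + en n" using cInf_lessD[OF ne] by blast
    then show "\<exists>\<psi>. \<psi> \<in> finsupp \<and> q (\<lambda>x. w x - \<psi> x) \<le> d + en n" unfolding S_def by force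
  qed
  then obtain \<phi> where "\<forall>n. \<phi> n \<in> finsupp \<and> q (\<lambda>x. w x - \<phi> n x) \<le> d + en n"
    using choice[of "\<lambda>n \<psi>. \<psi> \<in> finsupp \<and> q (\<lambda>x. w x - \<psi> x) \<le> d + en n"] by blast
  then show ?thesis using low by blast
qed

end



definition T :: "real \<Rightarrow> complex \<Rightarrow> complex" where
  "T r a = closest_point (cball 0 r) a"

lemma T_props:
  assumes r: "0 \<le> r"
  shows T_in: "cmod (T r a) \<le> r"
    and T_self: "cmod a \<le> r \<Longrightarrow> T r a = a"
    and T_lip: "cmod (T r a - T r a') \<le> cmod (a - a')"
    and T_firm: "0 \<le> Re ((a - a') * cnj (T r a - T r a'))"
proof -
  have cl: "closed (cball (0::complex) r)" and cv: "convex (cball (0::complex) r)"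
    and ne: "cball (0::complex) r \<noteq> {}" using r by auto
  show "cmod (T r a) \<le> r" unfolding T_def using closest_point_in_set[OF cl ne, of a] by simp
  show "cmod a \<le> r \<Longrightarrow> T r a = a" unfolding T_def by (intro closest_point_self) simp
  show "cmod (T r a - T r a') \<le> cmod (a - a')"
    using closest_point_lipschitz[OF cv cl ne, of a a'] unfolding T_def by (simp add: dist_norm)
  have i1: "inner (a - T r a) (T r a' - T r a) \<le> 0"
    unfolding T_def by (rule closest_point_dot[OF cv cl]) (rule closest_point_in_set[OF cl ne])
  have i2: "inner (a' - T r a') (T r a - T r a') \<le> 0"
    unfolding T_def by (rule closest_point_dot[OF cv cl]) (rule closest_point_in_set[OF cl ne])
  have "inner (a - a') (T r a - T r a') = inner (T r a - T r a') (T r a - T r a') - inner (a - T r a) (T r a' - T r a) - inner (a' - T r a') (T r a - T r a')"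
    by (simp add: inner_diff_left inner_diff_right inner_commute)
  moreover have "0 \<le> inner (T r a - T r a') (T r a - T r a')" by simp
  ultimately have "0 \<le> inner (a - a') (T r a - T r a')" using i1 i2 by linarith
  moreover have "Re ((a - a') * cnj (T r a - T r a')) = inner (a - a') (T r a - T r a')"
    by (simp add: inner_complex_def algebra_simps)
  ultimately show "0 \<le> Re ((a - a') * cnj (T r a - T r a'))" by simp
qed

lemma T_zero: "0 \<le> r \<Longrightarrow> T r 0 = 0" using T_self[of r 0] by simp

lemma wip_Re_ge:
  assumes nn: "\<And>i. 0 \<le> w i" and g: "wfin w g" and k: "wfin w k" and pos: "\<And>i. 0 \<le> Re (g i * cnj (k i))"
  shows "w j * Re (g j * cnj (k j)) \<le> Re (wip w g k)"
proof -
  have X: "(\<lambda>i. complex_of_real (w i) * (g i * cnj (k i))) summable_on UNIV" by (rule wip_summable[OF nn g k])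
  have "Re (wip w g k) = (\<Sum>\<^sub>\<infinity>i. Re (complex_of_real (w i) * (g i * cnj (k i))))"
    unfolding wip_def by (rule infsum_Re[OF X, symmetric])
  also have "\<dots> = (\<Sum>\<^sub>\<infinity>i. w i * Re (g i * cnj (k i)))" by simp
  finally have eq: "Re (wip w g k) = (\<Sum>\<^sub>\<infinity>i. w i * Re (g i * cnj (k i)))" .
  have S: "(\<lambda>i. w i * Re (g i * cnj (k i))) summable_on UNIV" using summable_on_Re[OF X] by simp
  have "(\<Sum>\<^sub>\<infinity>i\<in>{j}. w i * Re (g i * cnj (k i))) \<le> (\<Sum>\<^sub>\<infinity>i. w i * Re (g i * cnj (k i)))"
    using S nn pos by (intro infsum_mono_neutral) auto
  then show ?thesis using eq by simp
qed

context graph begin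

lemma q_trunc:
  assumes r: "0 \<le> r" and g: "D g"
  shows "D (\<lambda>x. T r (g x))" "q (\<lambda>x. T r (g x)) \<le> q g"
proof -
  have le0: "cmod (T r a) \<le> cmod a" for a using T_lip[OF r, of a 0] T_zero[OF r] by simp
  have led: "cmod (dif (\<lambda>x. T r (g x)) p) \<le> cmod (dif g p)" for p
    unfolding dif_def using T_lip[OF r] by simp
  have 1: "wfin (bb b) (dif (\<lambda>x. T r (g x)))" "wsq (bb b) (dif (\<lambda>x. T r (g x))) \<le> wsq (bb b) (dif g)"
    using wfin_mono[of "bb b", OF bb_nn _ led] g unfolding DD_def by auto
  have 2: "wfin c (\<lambda>x. T r (g x))" "wsq c (\<lambda>x. T r (g x)) \<le> wsq c g"
    using wfin_mono[of c, OF c_nn _ le0] g unfolding DD_def by auto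
  have 3: "wfin m (\<lambda>x. T r (g x))" "wsq m (\<lambda>x. T r (g x)) \<le> wsq m g"
    using wfin_mono[of m, OF m_nn _ le0] g unfolding DD_def by auto
  show "D (\<lambda>x. T r (g x))" using 1 2 3 unfolding DD_def by auto
  show "q (\<lambda>x. T r (g x)) \<le> q g" using 1 2 3 unfolding qq_def by auto
qed

lemma trunc_notQD:
  assumes h: "harm u" and x0: "u x0 \<noteq> 0"
  shows "(\<lambda>x. T (cmod (u x0)) (u x)) \<notin> QD_dom m b c"
proof
  define r where "r = cmod (u x0)"
  have r: "0 < r" using x0 by (simp add: r_def)
  define w where "w = (\<lambda>x. T r (u x))"
  have u: "D u" using h by (simp add: harm_def)
  have Dw: "D w" unfolding w_def using q_trunc(1)[OF _ u] r by simp
  assume "(\<lambda>x. T (cmod (u x0)) (u x)) \<in> QD_dom m b c"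
  then have wQD: "w \<in> QD_dom m b c" unfolding w_def r_def .
  have firm0: "0 \<le> Re (a * cnj (T r a))" for a using T_firm[of r a 0] T_zero[of r] r by simp
  have wdef_dif: "dif w p = T r (u (fst p)) - T r (u (snd p))" for p by (simp add: dif_def w_def)
  have p1: "0 \<le> Re (dif u i * cnj (dif w i))" for i
    using T_firm[of r "u (fst i)" "u (snd i)"] r by (simp add: dif_def w_def)
  have R1: "0 \<le> Re (wip (bb b) (dif u) (dif w))"
  proof -
    have "bb b (x0, x0) * Re (dif u (x0, x0) * cnj (dif w (x0, x0))) \<le> Re (wip (bb b) (dif u) (dif w))"
      using u Dw p1 unfolding DD_def by (intro wip_Re_ge bb_nn) auto
    moreover have "0 \<le> bb b (x0, x0) * Re (dif u (x0, x0) * cnj (dif w (x0, x0)))"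
      by (intro mult_nonneg_nonneg bb_nn p1)
    ultimately show ?thesis by linarith
  qed
  have R2: "0 \<le> Re (wip c u w)"
    using wip_Re_ge[of c, OF c_nn, of u w x0] u Dw firm0 c_nn[of x0] unfolding DD_def w_def
    by (meson mult_nonneg_nonneg order_trans)
  have wx0: "w x0 = u x0" unfolding w_def by (rule T_self) (use r in \<open>simp_all add: r_def\<close>)
  have "m x0 * Re (u x0 * cnj (w x0)) \<le> Re (wip m u w)"
    using wip_Re_ge[of m, OF m_nn, of u w x0] u Dw firm0 unfolding DD_def w_def by blast
  moreover have "Re (u x0 * cnj (w x0)) = (cmod (u x0))\<^sup>2"
    unfolding wx0 by (metis Re_complex_of_real complex_norm_square)
  moreover have "0 < m x0 * (cmod (u x0))\<^sup>2" using m_pos[of x0] x0 by simp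
  ultimately have R3: "0 < Re (wip m u w)" by simp
  define Rr where "Rr = Re (B u w)"
  have Rpos: "0 < Rr" unfolding Rr_def BB_def using R1 R2 R3 by simp
  define Q where "Q = q w"
  have Q0: "0 \<le> Q" unfolding Q_def by (rule q_nonneg)
  define s where "s = Rr / (Q + 1)"
  have s: "0 < s" unfolding s_def using Rpos Q0 by simp
  have sQD: "(\<lambda>x. complex_of_real s * w x) \<in> QD_dom m b c"
  proof -
    obtain \<phi> where \<phi>: "\<And>n. \<phi> n \<in> finsupp" "\<And>n. D (\<lambda>x. w x - \<phi> n x)"
      and lim: "(\<lambda>n. q (\<lambda>x. w x - \<phi> n x)) \<longlonglongrightarrow> 0"
      using QD_unfold(2)[OF wQD] by blast
    have eq: "(\<lambda>x. complex_of_real s * w x - complex_of_real s * \<phi> n x) = (\<lambda>x. complex_of_real s * (w x - \<phi> n x))" for n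
      by (rule ext) (simp add: algebra_simps)
    show ?thesis
    proof (rule QD_intro[of _ "\<lambda>n x. complex_of_real s * \<phi> n x"])
      show "D (\<lambda>x. complex_of_real s * w x)" by (rule D_scale[OF Dw])
      show "(\<lambda>x. complex_of_real s * \<phi> n x) \<in> finsupp" for n using finsupp_lin[OF \<phi>(1) \<phi>(1), of s n 0] by simp
      show "D (\<lambda>x. complex_of_real s * w x - complex_of_real s * \<phi> n x)" for n
        unfolding eq by (rule D_scale[OF \<phi>(2)])
      have "(\<lambda>n. s\<^sup>2 * q (\<lambda>x. w x - \<phi> n x)) \<longlonglongrightarrow> s\<^sup>2 * 0" by (intro tendsto_mult tendsto_const lim)
      then show "(\<lambda>n. q (\<lambda>x. complex_of_real s * w x - complex_of_real s * \<phi> n x)) \<longlonglongrightarrow> 0"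
        unfolding eq using q_scale[OF \<phi>(2)] by simp
    qed
  qed
  have "q u \<le> q (\<lambda>x. u x - complex_of_real s * w x)" by (rule harm_QD_le[OF h sQD])
  also have "\<dots> = q u - 2 * Re (cnj (complex_of_real s) * B u w) + (cmod (complex_of_real s))\<^sup>2 * Q"
    unfolding Q_def by (rule q_expand[OF u Dw])
  also have "Re (cnj (complex_of_real s) * B u w) = s * Rr" unfolding Rr_def by simp
  also have "(cmod (complex_of_real s))\<^sup>2 = s * s" using s by (simp add: power2_eq_square)
  finally have "2 * (s * Rr) \<le> s * s * Q" by simp
  then have "2 * Rr \<le> s * Q" using s by (simp add: algebra_simps)
  moreover have "s * Q < Rr"
  proof -
    have "s * Q = Rr * (Q / (Q + 1))" unfolding s_def by simp
    also have "\<dots> < Rr * 1" using Rpos Q0 by (intro mult_strict_left_mono) auto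
    finally show ?thesis by simp
  qed
  ultimately show False using Rpos by linarith
qed

lemma harm_bounded:
  assumes h: "harm u" and ne: "u \<noteq> (\<lambda>x. 0)"
  shows "\<exists>h. harm h \<and> h \<noteq> (\<lambda>x. 0) \<and> h \<in> linfty"
proof -
  obtain x0 where x0: "u x0 \<noteq> 0" using ne by auto
  define r where "r = cmod (u x0)"
  have r: "0 < r" using x0 by (simp add: r_def)
  define w where "w = (\<lambda>x. T r (u x))"
  have u: "D u" using h by (simp add: harm_def)
  have Dw: "D w" unfolding w_def using q_trunc(1)[OF _ u] r by simp
  have nQD: "w \<notin> QD_dom m b c" unfolding w_def r_def by (rule trunc_notQD[OF h x0])
  obtain d \<phi>0 where \<phi>0: "\<And>n. \<phi>0 n \<in> finsupp" and low: "\<And>\<psi>. \<psi> \<in> finsupp \<Longrightarrow> d \<le> q (\<lambda>x. w x - \<psi> x)"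
    and up0: "\<And>n. q (\<lambda>x. w x - \<phi>0 n x) \<le> d + en n"
    using exists_minseq[OF Dw] by blast
  define \<phi> where "\<phi> n = (\<lambda>x. w x - T r (w x - \<phi>0 n x))" for n
  have wr: "cmod (w x) \<le> r" for x unfolding w_def using T_in[of r] r by simp
  have \<phi>: "\<phi> n \<in> finsupp" for n
  proof -
    have "{x. \<phi> n x \<noteq> 0} \<subseteq> {x. \<phi>0 n x \<noteq> 0}"
    proof
      fix x assume "x \<in> {x. \<phi> n x \<noteq> 0}"
      then show "x \<in> {x. \<phi>0 n x \<noteq> 0}" unfolding \<phi>_def using T_self[of r "w x"] wr[of x] r by auto
    qed
    then show ?thesis using \<phi>0[of n] unfolding finsupp_def by (auto intro: finite_subset)
  qed
  have eqT: "(\<lambda>x. w x - \<phi> n x) = (\<lambda>x. T r (w x - \<phi>0 n x))" for n by (rule ext) (simp add: \<phi>_def)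
  have up: "q (\<lambda>x. w x - \<phi> n x) \<le> d + en n" for n
    unfolding eqT using q_trunc(2)[OF _ D_diff[OF Dw finsupp_D[OF \<phi>0]], of r n] r up0[of n] by simp
  obtain hh where hh: "harm hh" "hh \<noteq> (\<lambda>x. 0)" and lim: "\<And>x. (\<lambda>n. w x - \<phi> n x) \<longlonglongrightarrow> hh x"
    using minimize[OF Dw nQD \<phi> low up] by blast
  have "cmod (hh x) \<le> r" for x
  proof (rule LIMSEQ_le_const2)
    show "(\<lambda>n. cmod (w x - \<phi> n x)) \<longlonglongrightarrow> cmod (hh x)" by (intro tendsto_norm lim)
    show "\<exists>N. \<forall>n\<ge>N. cmod (w x - \<phi> n x) \<le> r" using T_in[of r] r by (simp add: \<phi>_def)
  qed
  then have "hh \<in> linfty" unfolding linfty_def by blast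
  then show ?thesis using hh by blast
qed

lemma main:
  shows "(QN_dom m b c \<noteq> QD_dom m b c
           \<longleftrightarrow> (\<exists>u \<in> QN_dom m b c. u \<noteq> (\<lambda>x. 0) \<and> u \<in> Ftilde b \<and> (\<forall>x. Ltilde m b c u x + u x = 0)))
       \<and> (QN_dom m b c \<noteq> QD_dom m b c
           \<longleftrightarrow> (\<exists>u \<in> QN_dom m b c \<inter> linfty. u \<noteq> (\<lambda>x. 0) \<and> u \<in> Ftilde b \<and> (\<forall>x. Ltilde m b c u x + u x = 0)))"
proof -
  have sub: "QD_dom m b c \<subseteq> QN_dom m b c" unfolding QD_dom_def by auto
  have AB: "\<exists>u. harm u \<and> u \<noteq> (\<lambda>x. 0)" if "QN_dom m b c \<noteq> QD_dom m b c"
  proof -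
    have "\<exists>w. w \<in> QN_dom m b c \<and> w \<notin> QD_dom m b c" using that sub by (metis subsetI subset_antisym)
    then obtain w where w: "w \<in> QN_dom m b c" "w \<notin> QD_dom m b c" by blast
    have Dw: "D w" using w(1) QN_dom_iff by blast
    obtain d \<phi> where "\<And>n. \<phi> n \<in> finsupp" "\<And>\<psi>. \<psi> \<in> finsupp \<Longrightarrow> d \<le> q (\<lambda>x. w x - \<psi> x)"
      "\<And>n. q (\<lambda>x. w x - \<phi> n x) \<le> d + en n"
      using exists_minseq[OF Dw] by blast
    from minimize[OF Dw w(2) this] show ?thesis by blast
  qed
  have BA: "QN_dom m b c \<noteq> QD_dom m b c" if "harm u" "u \<noteq> (\<lambda>x. 0)" for u
  proof
    assume eq: "QN_dom m b c = QD_dom m b c"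
    have u: "D u" using that by (simp add: harm_def)
    then have "u \<in> QD_dom m b c" using eq QN_dom_iff by blast
    from harm_QD_le[OF that(1) this] have "q u \<le> 0" using q_zero by simp
    then have "m x * (cmod (u x))\<^sup>2 \<le> 0" for x using q_term[OF u, of x] by linarith
    then have "u x = 0" for x using m_pos[of x] by (metis (no_types) mult_le_0_iff norm_le_zero_iff not_le zero_less_power2 power2_eq_square norm_zero zero_le_power2 antisym)
    then show False using that(2) by auto
  qed
  have conv: "(u \<in> QN_dom m b c \<and> u \<noteq> (\<lambda>x. 0) \<and> u \<in> Ftilde b \<and> (\<forall>x. Ltilde m b c u x + u x = 0))
     \<longleftrightarrow> harm u \<and> u \<noteq> (\<lambda>x. 0)" for u
    unfolding harm_def using QN_dom_iff D_Ftilde by blast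
  have 1: "QN_dom m b c \<noteq> QD_dom m b c \<longleftrightarrow> (\<exists>u. harm u \<and> u \<noteq> (\<lambda>x. 0))"
    using AB BA by blast
  have 2: "(\<exists>u. harm u \<and> u \<noteq> (\<lambda>x. 0)) \<longleftrightarrow> (\<exists>u. harm u \<and> u \<noteq> (\<lambda>x. 0) \<and> u \<in> linfty)"
    using harm_bounded by blast
  show ?thesis using 1 2 conv by blast
qed

end


theorem mainTheorem9:
  fixes m :: "'v::countable \<Rightarrow> real" and b :: "'v \<Rightarrow> 'v \<Rightarrow> real" and c :: "'v \<Rightarrow> real"
  assumes "is_graph m b c"
  shows "(QN_dom m b c \<noteq> QD_dom m b c
           \<longleftrightarrow> (\<exists>u \<in> QN_dom m b c. u \<noteq> (\<lambda>x. 0) \<and> u \<in> Ftilde b \<and> (\<forall>x. Ltilde m b c u x + u x = 0)))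
       \<and> (QN_dom m b c \<noteq> QD_dom m b c
           \<longleftrightarrow> (\<exists>u \<in> QN_dom m b c \<inter> linfty. u \<noteq> (\<lambda>x. 0) \<and> u \<in> Ftilde b \<and> (\<forall>x. Ltilde m b c u x + u x = 0)))"
proof -
  interpret graph m b c using assms by unfold_locales
  show ?thesis by (rule main)
qed

end
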